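(* Let $n > 2k+1$. There exists a deterministic algorithm that, on every instance with $n$ elements of which $k$ are corrupted, outputs a set of exactly $2k+1$ elements containing the uncorrupted maximum, using exactly $(n-(k+1))(2k+1) = 2nk + (n - 2k^2 - 3k - 1)$ comparison queries.
   Context: Model: there are $n$ elements $x_1,\dots,x_n$, exactly $k$ of which are corrupted (unknown to the algorithm). For every pair of distinct elements the comparison graph (a tournament) specifies which one is larger. The comparison graph restricted to the $n-k$ uncorrupted elements is acyclic; comparisons involving corrupted elements may be oriented arbitrarily. The uncorrupted maximum is the uncorrupted element larger than every other uncorrupted element. An algorithm knows $n$ and $k$, may query the orientation of any pair (a comparison query), and outputs a set of elements. *)

theory Defs
  imports Main
begin

text \<open>Elements are 0..<n. A comparison graph is T :: nat => nat => bool,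
  where T i j means: the comparison says x_i is larger than x_j.\<close>

definition tournament :: "nat \<Rightarrow> (nat \<Rightarrow> nat \<Rightarrow> bool) \<Rightarrow> bool" where
  "tournament n T \<longleftrightarrow> (\<forall>i<n. \<forall>j<n. i \<noteq> j \<longrightarrow> (T i j \<longleftrightarrow> \<not> T j i))"

definition uncorrupted_graph :: "nat \<Rightarrow> nat set \<Rightarrow> (nat \<Rightarrow> nat \<Rightarrow> bool) \<Rightarrow> (nat \<times> nat) set" where
  "uncorrupted_graph n C T =
     {(i, j). i < n \<and> j < n \<and> i \<notin> C \<and> j \<notin> C \<and> i \<noteq> j \<and> T i j}"

definition valid_instance :: "nat \<Rightarrow> nat \<Rightarrow> nat set \<Rightarrow> (nat \<Rightarrow> nat \<Rightarrow> bool) \<Rightarrow> bool" where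
  "valid_instance n k C T \<longleftrightarrow>
     C \<subseteq> {0..<n} \<and> card C = k \<and> tournament n T \<and> acyclic (uncorrupted_graph n C T)"

definition uncorrupted_max :: "nat \<Rightarrow> nat set \<Rightarrow> (nat \<Rightarrow> nat \<Rightarrow> bool) \<Rightarrow> nat \<Rightarrow> bool" where
  "uncorrupted_max n C T u \<longleftrightarrow>
     u < n \<and> u \<notin> C \<and> (\<forall>v<n. v \<notin> C \<and> v \<noteq> u \<longrightarrow> T u v)"

text \<open>Deterministic adaptive comparison algorithms = decision trees.\<close>

datatype alg = Query nat nat alg alg | Output "nat set"

fun run :: "alg \<Rightarrow> (nat \<Rightarrow> nat \<Rightarrow> bool) \<Rightarrow> (nat \<times> nat) list \<times> nat set" where
  "run (Output S) T = ([], S)"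
| "run (Query i j a b) T =
     (let (qs, S) = (if T i j then run a T else run b T) in ((i, j) # qs, S))"

end

theory Submission
  imports Defs
begin

definition sound :: "(nat \<Rightarrow> nat \<Rightarrow> bool) \<Rightarrow> (nat \<times> nat) set \<Rightarrow> bool" where
  "sound T E \<longleftrightarrow> (\<forall>(a,b)\<in>E. a \<noteq> b \<and> T a b)"

definition complete :: "nat set \<Rightarrow> (nat \<times> nat) set \<Rightarrow> bool" where
  "complete A E \<longleftrightarrow> (\<forall>a\<in>A. \<forall>b\<in>A. a \<noteq> b \<longrightarrow> (a,b) \<in> E \<or> (b,a) \<in> E)"

fun qall :: "nat \<Rightarrow> nat list \<Rightarrow> (nat \<times> nat) set \<Rightarrow> ((nat \<times> nat) set \<Rightarrow> alg) \<Rightarrow> alg" where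
  "qall x [] E c = c E"
| "qall x (y#ys) E c = Query x y (qall x ys (insert (x,y) E) c) (qall x ys (insert (y,x) E) c)"

definition ext :: "nat \<Rightarrow> nat list \<Rightarrow> (nat \<Rightarrow> nat \<Rightarrow> bool) \<Rightarrow> (nat \<times> nat) set \<Rightarrow> (nat \<times> nat) set" where
  "ext x ys T E = E \<union> {(x,y)|y. y \<in> set ys \<and> T x y} \<union> {(y,x)|y. y \<in> set ys \<and> \<not> T x y}"

lemma run_qall:
  "run (qall x ys E c) T = (map (Pair x) ys @ fst (run (c (ext x ys T E)) T), snd (run (c (ext x ys T E)) T))"
proof (induction ys arbitrary: E)
  case Nil
  then show ?case by (simp add: ext_def)
next
  case (Cons y ys)
  have 1: "ext x ys T (insert (x,y) E) = ext x (y#ys) T E" if "T x y"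
    using that by (auto simp: ext_def)
  have 2: "ext x ys T (insert (y,x) E) = ext x (y#ys) T E" if "\<not> T x y"
    using that by (auto simp: ext_def)
  show ?case using Cons 1 2 by (auto split: prod.splits)
qed

primrec rr :: "nat list \<Rightarrow> (nat \<times> nat) set \<Rightarrow> ((nat \<times> nat) set \<Rightarrow> alg) \<Rightarrow> alg" where
  "rr [] E c = c E"
| "rr (x#xs) E c = qall x xs E (\<lambda>E'. rr xs E' c)"

lemma sound_ext:
  assumes "tournament n T" "sound T E" "x < n" "set ys \<subseteq> {..<n}" "x \<notin> set ys"
  shows "sound T (ext x ys T E)"
  unfolding sound_def
proof (intro ballI)
  fix p assume "p \<in> ext x ys T E"
  then consider "p \<in> E" | y where "p = (x,y)" "y \<in> set ys" "T x y"
    | y where "p = (y,x)" "y \<in> set ys" "\<not> T x y"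
    unfolding ext_def by blast
  then show "case p of (a, b) \<Rightarrow> a \<noteq> b \<and> T a b"
  proof cases
    case 1 then show ?thesis using assms(2) unfolding sound_def by blast
  next
    case 2 then show ?thesis using assms(5) by auto
  next
    case (3 y)
    have "y < n" "y \<noteq> x" using 3 assms(4,5) by auto
    then have "T y x" using 3 assms(1,3) unfolding tournament_def by blast
    then show ?thesis using 3 \<open>y \<noteq> x\<close> by auto
  qed
qed

lemma complete_ext2:
  assumes "complete (set ys) E"
  shows "complete (set (x#ys)) (ext x ys T E)"
  using assms unfolding complete_def ext_def by auto

lemma run_rr:
  assumes "tournament n T"
  shows "distinct xs \<Longrightarrow> set xs \<subseteq> {..<n} \<Longrightarrow> sound T E \<Longrightarrow>
    \<exists>E' qs1. run (rr xs E c) T = (qs1 @ fst (run (c E') T), snd (run (c E') T))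
      \<and> (\<forall>(i,j)\<in>set qs1. i \<in> set xs \<and> j \<in> set xs \<and> i \<noteq> j)
      \<and> 2 * length qs1 = length xs * (length xs - 1)
      \<and> sound T E' \<and> complete (set xs) E' \<and> E \<subseteq> E'"
proof (induction xs arbitrary: E)
  case Nil
  then show ?case by (auto simp: complete_def)
next
  case (Cons x xs)
  let ?E = "ext x xs T E"
  have s: "sound T ?E" using sound_ext[OF assms Cons.prems(3)] Cons.prems by auto
  obtain E' qs1 where h: "run (rr xs ?E c) T = (qs1 @ fst (run (c E') T), snd (run (c E') T))"
      "\<forall>(i,j)\<in>set qs1. i \<in> set xs \<and> j \<in> set xs \<and> i \<noteq> j"
      "2 * length qs1 = length xs * (length xs - 1)" "sound T E'" "complete (set xs) E'" "?E \<subseteq> E'"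
    using Cons.IH[of ?E] Cons.prems s by auto
  have c0: "\<forall>y\<in>set xs. (x,y) \<in> ?E \<or> (y,x) \<in> ?E"
    unfolding ext_def by blast
  have c: "complete (set (x#xs)) E'"
    using c0 h(5,6) unfolding complete_def by (auto 0 3)
  have r: "run (rr (x#xs) E c) T = ((map (Pair x) xs @ qs1) @ fst (run (c E') T), snd (run (c E') T))"
    using h(1) by (simp add: run_qall)
  have l: "2 * length (map (Pair x) xs @ qs1) = length (x#xs) * (length (x#xs) - 1)"
  proof (cases "length xs")
    case 0 then show ?thesis using h(3) by simp
  next
    case (Suc j)
    then have "2 * length qs1 = Suc j * j" using h(3) by simp
    then show ?thesis using Suc by simp
  qed
  have sub: "E \<subseteq> E'" using h(6) unfolding ext_def by blast
  have pr: "\<forall>(i,j)\<in>set (map (Pair x) xs @ qs1). i \<in> set (x#xs) \<and> j \<in> set (x#xs) \<and> i \<noteq> j"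
    using h(2) Cons.prems(1) by auto
  show ?case
    apply (rule exI[of _ E'], rule exI[of _ "map (Pair x) xs @ qs1"])
    using r l c h(4) sub pr by blast
qed

lemma exists_big:
  assumes fin: "finite A" and cA: "card A = 2*k+2" and co: "complete A E"
    and irr: "\<forall>(a,b)\<in>E. a \<noteq> b"
  shows "\<exists>v\<in>A. k+1 \<le> card {w\<in>A. (w,v)\<in>E}"
proof (rule ccontr)
  assume "\<not> ?thesis"
  hence le: "\<forall>v\<in>A. card {w\<in>A. (w,v)\<in>E} \<le> k" by auto
  define D where "D = (SIGMA v:A. {w\<in>A. (w,v)\<in>E})"
  define D' where "D' = (SIGMA v:A. {w\<in>A. (v,w)\<in>E})"
  have fD: "finite D" "finite D'" using fin unfolding D_def D'_def by auto
  have cD: "card D = (\<Sum>v\<in>A. card {w\<in>A. (w,v)\<in>E})"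
    unfolding D_def using fin by (simp add: card_SigmaI)
  have "card D \<le> card A * k"
    using cD sum_mono[of A "\<lambda>v. card {w\<in>A. (w,v)\<in>E}" "\<lambda>_. k"] le by simp
  moreover have "D' = (\<lambda>(a,b). (b,a)) ` D" unfolding D_def D'_def by auto
  hence "card D' \<le> card D" using card_image_le fD by simp
  moreover have "A \<times> A - Id_on A \<subseteq> D \<union> D'"
    using co unfolding D_def D'_def complete_def Id_on_def by auto
  hence "card (A \<times> A - Id_on A) \<le> card D + card D'"
    using fD by (meson card_Un_le card_mono finite_UnI le_trans)
  moreover have "card (A \<times> A - Id_on A) = card A * card A - card A"
  proof -
    have "Id_on A \<subseteq> A \<times> A" by auto
    moreover have "card (Id_on A) = card A"
    proof -
      have "Id_on A = (\<lambda>a. (a,a)) ` A" unfolding Id_on_def by auto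
      thus ?thesis by (simp add: card_image inj_on_def)
    qed
    ultimately show ?thesis using fin card_Diff_subset[of "Id_on A" "A \<times> A"] finite_subset[of "Id_on A" "A \<times> A"] by (simp add: card_cartesian_product)
  qed
  ultimately have a: "card A * card A - card A \<le> 2 * (card A * k)" by linarith
  define m where "m = card A"
  have m2: "m = 2*k+2" using cA m_def by simp
  have "m * (2*k+1) + m = m * m" unfolding m2 by (simp add: algebra_simps)
  hence "m * m - m = m * (2*k+1)" by linarith
  hence "m * (2*k+1) \<le> m * (2*k)" using a unfolding m_def[symmetric] by (simp add: mult.left_commute)
  hence "2*k+1 \<le> 2*k" using m2 by (metis mult_le_cancel1 zero_less_Suc add_2_eq_Suc' not_less)
  thus False by simp
qed

definition pick :: "nat \<Rightarrow> nat list \<Rightarrow> (nat \<times> nat) set \<Rightarrow> nat" where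
  "pick k L E = (SOME v. v \<in> set L \<and> k+1 \<le> card {w\<in>set L. (w,v)\<in>E})"

primrec phase :: "nat \<Rightarrow> nat list \<Rightarrow> nat list \<Rightarrow> (nat \<times> nat) set \<Rightarrow> alg" where
  "phase k [] L E = Output (set L)"
| "phase k (x#xs) L E = qall x L E (\<lambda>E'. phase k xs (remove1 (pick k (x#L) E') (x#L)) E')"

lemma um_indeg:
  assumes "tournament n T" "sound T E" "uncorrupted_max n C T u" "set L \<subseteq> {..<n}"
  shows "{w\<in>set L. (w,u)\<in>E} \<subseteq> C"
proof
  fix w assume w: "w \<in> {w\<in>set L. (w,u)\<in>E}"
  then have wu: "w \<noteq> u" "T w u" "w < n" using assms(2,4) unfolding sound_def by auto
  show "w \<in> C"
  proof (rule ccontr)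
    assume "w \<notin> C"
    then have "T u w" using assms(3) wu unfolding uncorrupted_max_def by blast
    moreover have "u < n" using assms(3) unfolding uncorrupted_max_def by blast
    ultimately show False using wu assms(1) unfolding tournament_def by blast
  qed
qed

lemma phase_ok:
  assumes tou: "tournament n T" and Cs: "C \<subseteq> {0..<n}" and cC: "card C = k"
  shows "distinct (xs @ L) \<Longrightarrow> set (xs @ L) \<subseteq> {..<n} \<Longrightarrow> length L = 2*k+1 \<Longrightarrow>
    sound T E \<Longrightarrow> complete (set L) E \<Longrightarrow>
    (\<forall>u. uncorrupted_max n C T u \<longrightarrow> u \<in> set L \<union> set xs) \<Longrightarrow>
    (let (qs, S) = run (phase k xs L E) T in
       (\<forall>(i, j) \<in> set qs. i < n \<and> j < n \<and> i \<noteq> j)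
     \<and> length qs = length xs * (2 * k + 1)
     \<and> S \<subseteq> {0..<n} \<and> card S = 2 * k + 1
     \<and> (\<forall>u. uncorrupted_max n C T u \<longrightarrow> u \<in> S))"
proof (induction xs arbitrary: L E)
  case Nil
  then show ?case by (auto simp: distinct_card)
next
  case (Cons x xs)
  let ?E = "ext x L T E"
  let ?v = "pick k (x#L) ?E"
  let ?L = "remove1 ?v (x#L)"
  have s: "sound T ?E" using sound_ext[OF tou Cons.prems(4), of x L] Cons.prems(1,2) by auto
  have c: "complete (set (x#L)) ?E" using complete_ext2 Cons.prems(5) by blast
  have "\<exists>v\<in>set (x#L). k+1 \<le> card {w\<in>set (x#L). (w,v)\<in>?E}"
    apply (rule exists_big[OF _ _ c])
    using Cons.prems(1,3) s by (auto simp: distinct_card sound_def)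
  hence "\<exists>v. v \<in> set (x#L) \<and> k+1 \<le> card {w\<in>set (x#L). (w,v)\<in>?E}" by blast
  hence vp0: "?v \<in> set (x#L) \<and> k+1 \<le> card {w\<in>set (x#L). (w,?v)\<in>?E}"
    unfolding pick_def by (rule someI_ex)
  hence vp: "?v \<in> set (x#L)" "k+1 \<le> card {w\<in>set (x#L). (w,?v)\<in>?E}" by auto
  have notum: "\<not> uncorrupted_max n C T ?v"
  proof
    assume um: "uncorrupted_max n C T ?v"
    have "{w\<in>set (x#L). (w,?v)\<in>?E} \<subseteq> C"
      using um_indeg[OF tou s um, of "x#L"] Cons.prems(2) by auto
    hence "card {w\<in>set (x#L). (w,?v)\<in>?E} \<le> k"
      using cC Cs by (metis card_mono finite_atLeastLessThan finite_subset)
    thus False using vp by simp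
  qed
  have dxl: "distinct (x#L)" using Cons.prems(1) by auto
  have sL: "set ?L = set (x#L) - {?v}" using dxl by (simp only: set_remove1_eq)
  have IH: "let (qs, S) = run (phase k xs ?L ?E) T in
       (\<forall>(i, j) \<in> set qs. i < n \<and> j < n \<and> i \<noteq> j)
     \<and> length qs = length xs * (2 * k + 1)
     \<and> S \<subseteq> {0..<n} \<and> card S = 2 * k + 1
     \<and> (\<forall>u. uncorrupted_max n C T u \<longrightarrow> u \<in> S)"
  proof (rule Cons.IH)
    show "distinct (xs @ ?L)" using Cons.prems(1) sL by auto
    show "set (xs @ ?L) \<subseteq> {..<n}" using Cons.prems(2) sL by auto
    show "length ?L = 2*k+1" using vp(1) Cons.prems(3) by (auto simp: length_remove1)
    show "sound T ?E" by (rule s)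
    show "complete (set ?L) ?E" using c sL unfolding complete_def by auto
    show "\<forall>u. uncorrupted_max n C T u \<longrightarrow> u \<in> set ?L \<union> set xs"
      using Cons.prems(6) notum sL by auto
  qed
  have pairs: "\<forall>(i,j)\<in>set (map (Pair x) L). i < n \<and> j < n \<and> i \<noteq> j"
    using Cons.prems(1,2) by auto
  obtain qs S where R: "run (phase k xs ?L ?E) T = (qs, S)" by (cases "run (phase k xs ?L ?E) T")
  have eq: "run (phase k (x#xs) L E) T = (map (Pair x) L @ qs, S)"
    using R by (simp add: run_qall)
  have I: "(\<forall>(i, j) \<in> set qs. i < n \<and> j < n \<and> i \<noteq> j)
     \<and> length qs = length xs * (2 * k + 1)
     \<and> S \<subseteq> {0..<n} \<and> card S = 2 * k + 1
     \<and> (\<forall>u. uncorrupted_max n C T u \<longrightarrow> u \<in> S)" using IH R by simp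
  have "\<forall>(i, j) \<in> set (map (Pair x) L @ qs). i < n \<and> j < n \<and> i \<noteq> j"
    using I pairs by auto
  moreover have "length (map (Pair x) L @ qs) = length (x#xs) * (2 * k + 1)"
    using I Cons.prems(3) by simp
  ultimately show ?case using eq I by simp
qed

theorem mainTheorem4:
  fixes n k :: nat
  assumes "n > 2 * k + 1"
  shows "\<exists>A :: alg. \<forall>C T. valid_instance n k C T \<longrightarrow>
           (let (qs, S) = run A T in
              (\<forall>(i, j) \<in> set qs. i < n \<and> j < n \<and> i \<noteq> j)
            \<and> length qs = (n - (k + 1)) * (2 * k + 1)
            \<and> S \<subseteq> {0..<n} \<and> card S = 2 * k + 1
            \<and> (\<forall>u. uncorrupted_max n C T u \<longrightarrow> u \<in> S))"
proof (intro exI allI impI)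
  fix C T
  assume vi: "valid_instance n k C T"
  hence tou: "tournament n T" and Cs: "C \<subseteq> {0..<n}" and cC: "card C = k"
    unfolding valid_instance_def by auto
  let ?L = "[0..<2*k+1]"
  let ?xs = "[2*k+1..<n]"
  have d: "distinct ?L" by simp
  have st: "set ?L \<subseteq> {..<n}" using assms by auto
  have s0: "sound T {}" by (simp add: sound_def)
  obtain E' qs1 where h: "run (rr ?L {} (phase k ?xs ?L)) T
        = (qs1 @ fst (run (phase k ?xs ?L E') T), snd (run (phase k ?xs ?L E') T))"
      "\<forall>(i,j)\<in>set qs1. i \<in> set ?L \<and> j \<in> set ?L \<and> i \<noteq> j"
      "2 * length qs1 = length ?L * (length ?L - 1)" "sound T E'" "complete (set ?L) E'"
    using run_rr[OF tou d st s0, of "phase k ?xs ?L"] by blast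
  have P: "let (qs, S) = run (phase k ?xs ?L E') T in
       (\<forall>(i, j) \<in> set qs. i < n \<and> j < n \<and> i \<noteq> j)
     \<and> length qs = length ?xs * (2 * k + 1)
     \<and> S \<subseteq> {0..<n} \<and> card S = 2 * k + 1
     \<and> (\<forall>u. uncorrupted_max n C T u \<longrightarrow> u \<in> S)"
    apply (rule phase_ok[OF tou Cs cC])
    using assms h(4,5) by (auto simp: uncorrupted_max_def)
  have l1: "length qs1 = k * (2*k+1)" using h(3) by simp
  have arith: "k * (2*k+1) + (n - (2*k+1)) * (2*k+1) = (n - (k + 1)) * (2 * k + 1)"
  proof -
    obtain m where m: "n = m + (2*k+1)" using assms less_imp_add_positive by (metis add.commute less_imp_le le_add_diff_inverse)
    have "n - (k+1) = m + k" using m by simp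
    then show ?thesis using m by (simp add: algebra_simps)
  qed
  show "let (qs, S) = run (rr ?L {} (phase k ?xs ?L)) T in
              (\<forall>(i, j) \<in> set qs. i < n \<and> j < n \<and> i \<noteq> j)
            \<and> length qs = (n - (k + 1)) * (2 * k + 1)
            \<and> S \<subseteq> {0..<n} \<and> card S = 2 * k + 1
            \<and> (\<forall>u. uncorrupted_max n C T u \<longrightarrow> u \<in> S)"
  proof -
    obtain qs S where R: "run (phase k ?xs ?L E') T = (qs, S)" by (cases "run (phase k ?xs ?L E') T")
    have I: "(\<forall>(i, j) \<in> set qs. i < n \<and> j < n \<and> i \<noteq> j)
     \<and> length qs = length ?xs * (2 * k + 1)
     \<and> S \<subseteq> {0..<n} \<and> card S = 2 * k + 1
     \<and> (\<forall>u. uncorrupted_max n C T u \<longrightarrow> u \<in> S)" using P R by simp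
    have eq: "run (rr ?L {} (phase k ?xs ?L)) T = (qs1 @ qs, S)" using h(1) R by simp
    have "\<forall>(i, j) \<in> set (qs1 @ qs). i < n \<and> j < n \<and> i \<noteq> j"
      using I h(2) assms by fastforce
    moreover have "length (qs1 @ qs) = (n - (k + 1)) * (2 * k + 1)"
      using I l1 arith by simp
    ultimately show ?thesis unfolding eq using I by simp
  qed
qed

end
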